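(* The map $\bar f=h\circ f\circ g$ defined below is a bijection from $\mathcal{G}_3$ onto $\mathcal{A}_3$, and for each $\pi\in\mathcal G_3$, $\bar f(\pi)$ is a partition of the same integer as $\pi$.
   Context: Partitions are nonincreasing finite sequences of positive integers; $m_j(\pi)$ is the multiplicity of $j$, $\ell(\pi)$ the number of parts, $\cup$ the multiset union of parts, $\langle a^m\rangle$ the partition of $m$ copies of $a$. $\mathcal{G}_3$: partitions $\pi$ with $m_1(\pi)\le 2$ and $m_j(\pi)+m_{j+1}(\pi)\le2$ for all $j\ge1$. $\mathcal{G}_1$: partitions with $m_1(\pi)=0$ and $m_j(\pi)+m_{j+1}(\pi)\le2$ for all $j\ge 1$. The map $g$ adds $1$ to every part of $\pi\in\mathcal G_3$ (giving an element of $\mathcal G_1$). For $\pi\in\mathcal{G}_1$: let $D(\pi)$ be the number of distinct parts of multiplicity $2$, $R_1(\pi)>\dots>R_{D(\pi)}(\pi)$ these parts, $R_{D(\pi)+1}(\pi)=0$, $R_0(\pi)=\infty$, and $\pi^{(k)}$ ($0\le k\le D(\pi)$) the partition of parts of $\pi$ strictly between $R_{k+1}(\pi)$ and $R_k(\pi)$. Then $$f(\pi)=\bigcup_{i=1}^{D(\pi)}\big\langle (2i)^{R_i(\pi)-R_{i+1}(\pi)-\ell(\pi^{(i)})}\big\rangle\ \cup\ \bigcup_{i=0}^{D(\pi)}\Big(\pi^{(i)}\text{ with }2i\text{ added to each part}\Big).$$ $\mathcal{A}_1$: partitions $\lambda$ with $m_j(\lambda)\le1$ for odd $j$, $m_j(\lambda)=0$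 for odd $j<R_1(\lambda)+2$, $m_j(\lambda)\ge2$ for even $j$ with $0<j<R_1(\lambda)$, where $R_1(\lambda)$ is the largest repeated part of $\lambda$ (or $0$). For $\lambda\in\mathcal A_1$, let $P(\lambda)$ be the subpartition of parts greater than $R_1(\lambda)$; $h(\lambda)$ is obtained from $\lambda$ by subtracting $1$ from each part of $P(\lambda)$ and, for each even $2i$ with $2\le 2i\le R_1(\lambda)$, replacing two copies of $2i$ by two copies of $2i-1$. $\mathcal{A}_3$: partitions $\lambda$ for which there exists an integer $j\ge0$ such that $m_{2i-1}(\lambda)=2$ for all $1\le i\le j$ and every part of $\lambda$ greater than $2j$ has multiplicity at most $1$ (even parts $\le 2j$ may occur with any multiplicity). *)

theory Defs
  imports Main "HOL-Library.Multiset"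
begin

text \<open>Partitions are represented as finite multisets of positive naturals:
  m_j = count p j, number of parts = size p, the partitioned integer = sum_mset p.\<close>

definition is_partition :: "nat multiset \<Rightarrow> bool" where
  "is_partition p \<longleftrightarrow> 0 \<notin># p"

definition G3 :: "nat multiset set" where
  "G3 = {p. is_partition p \<and> count p 1 \<le> 2 \<and>
            (\<forall>j\<ge>1. count p j + count p (Suc j) \<le> 2)}"

definition G1 :: "nat multiset set" where
  "G1 = {p. is_partition p \<and> count p 1 = 0 \<and>
            (\<forall>j\<ge>1. count p j + count p (Suc j) \<le> 2)}"

definition g_map :: "nat multiset \<Rightarrow> nat multiset" where
  "g_map p = image_mset Suc p"

definition twoparts :: "nat multiset \<Rightarrow> nat list" where
  "twoparts p = rev (sorted_list_of_set {j. count p j = 2})"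

definition Dnum :: "nat multiset \<Rightarrow> nat" where
  "Dnum p = length (twoparts p)"

text \<open>R_i for 1 \<le> i \<le> D; R_{D+1} = 0 (R_0 = \<infinity> is handled in piece).\<close>
definition Rpart :: "nat multiset \<Rightarrow> nat \<Rightarrow> nat" where
  "Rpart p i = (if 1 \<le> i \<and> i \<le> Dnum p then twoparts p ! (i - 1) else 0)"

definition piece :: "nat multiset \<Rightarrow> nat \<Rightarrow> nat multiset" where
  "piece p k = filter_mset (\<lambda>x. Rpart p (Suc k) < x \<and> (k = 0 \<or> x < Rpart p k)) p"

definition f_map :: "nat multiset \<Rightarrow> nat multiset" where
  "f_map p =
     (\<Sum>i\<in>{1..Dnum p}. replicate_mset (Rpart p i - Rpart p (Suc i) - size (piece p i)) (2 * i))
   + (\<Sum>i\<in>{0..Dnum p}. image_mset (\<lambda>x. x + 2 * i) (piece p i))"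

definition R1 :: "nat multiset \<Rightarrow> nat" where
  "R1 l = (if {j. 2 \<le> count l j} = {} then 0 else Max {j. 2 \<le> count l j})"

definition A1 :: "nat multiset set" where
  "A1 = {l. is_partition l \<and>
            (\<forall>j. odd j \<longrightarrow> count l j \<le> 1) \<and>
            (\<forall>j. odd j \<and> j < R1 l + 2 \<longrightarrow> count l j = 0) \<and>
            (\<forall>j. even j \<and> 0 < j \<and> j < R1 l \<longrightarrow> 2 \<le> count l j)}"

definition h_map :: "nat multiset \<Rightarrow> nat multiset" where
  "h_map l =
     image_mset (\<lambda>x. x - 1) (filter_mset (\<lambda>x. R1 l < x) l)
   + (filter_mset (\<lambda>x. x \<le> R1 l) l - (\<Sum>i\<in>{1..R1 l div 2}. replicate_mset 2 (2 * i)))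
   + (\<Sum>i\<in>{1..R1 l div 2}. replicate_mset 2 (2 * i - 1))"

definition A3 :: "nat multiset set" where
  "A3 = {l. is_partition l \<and>
            (\<exists>j::nat. (\<forall>i. 1 \<le> i \<and> i \<le> j \<longrightarrow> count l (2 * i - 1) = 2) \<and>
                      (\<forall>x. 2 * j < x \<longrightarrow> count l x \<le> 1))}"

definition fbar :: "nat multiset \<Rightarrow> nat multiset" where
  "fbar = h_map \<circ> f_map \<circ> g_map"

end

theory Submission
  imports Defs
begin

lemma sls_image:
  fixes f :: "nat \<Rightarrow> nat"
  assumes "finite A" "strict_mono f"
  shows "sorted_list_of_set (f ` A) = map f (sorted_list_of_set A)"
proof -
  have "sorted_wrt (<) (map f (sorted_list_of_set A))"
    using sorted_list_of_set.strict_sorted_key_list_of_set[of A] assms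
    by (auto simp: sorted_wrt_map strict_mono_less elim!: sorted_wrt_mono_rel[rotated])
  moreover have "set (map f (sorted_list_of_set A)) = f ` A" using assms by simp
  ultimately show ?thesis using assms
    by (intro strict_sorted_equal) (simp_all add: strict_sorted_list_of_set)
qed

lemma sls_insert_min:
  fixes a :: nat
  assumes "finite B" "\<forall>b\<in>B. a < b"
  shows "sorted_list_of_set (insert a B) = a # sorted_list_of_set B"
proof -
  have s: "sorted_wrt (<) (sorted_list_of_set B)"
    using sorted_list_of_set.strict_sorted_key_list_of_set[of B] by simp
  have nb: "a \<notin> B" using assms by auto
  show ?thesis
    by (rule sorted_list_of_set_unique[THEN iffD1]) (use assms s nb in auto)
qed

lemma count_image_inj: "inj f \<Longrightarrow> count (image_mset f M) (f x) = count M x"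
  by (induction M) (auto simp: inj_def)

lemma count_image_Suc: "count (image_mset Suc (M::nat multiset)) x = (if x = 0 then 0 else count M (x - 1))"
proof (cases x)
  case 0
  then have "x \<notin># image_mset Suc M" by auto
  then have "count (image_mset Suc M) x = 0" by (simp only: count_eq_zero_iff not_False_eq_True)
  then show ?thesis using 0 by simp
next
  case (Suc y) then show ?thesis using count_image_inj[of Suc M y] by simp
qed

lemma count_image_addk: "count (image_mset (\<lambda>x. x + k) (M::nat multiset)) x = (if x < k then 0 else count M (x - k))"
proof (cases "x < k")
  case True
  then have "x \<notin># image_mset (\<lambda>x. x + k) M" by auto
  then have "count (image_mset (\<lambda>x. x + k) M) x = 0" by (simp only: count_eq_zero_iff not_False_eq_True)
  then show ?thesis using True by simp
next
  case False
  then obtain y where "x = y + k" by (intro that[of "x - k"]) simp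
  then show ?thesis using count_image_inj[of "\<lambda>x. x + k" M y] by (simp add: inj_def)
qed

lemma count_image_add2: "count (image_mset (\<lambda>x. Suc (Suc x)) (M::nat multiset)) x = (if x < 2 then 0 else count M (x - 2))"
  using count_image_addk[of 2 M x] by simp

definition TT :: "nat multiset \<Rightarrow> nat set" where "TT q = {j. count q j = 2}"

lemma TT_finite: "finite (TT q)"
  by (rule finite_subset[of _ "set_mset q"]) (auto simp: TT_def simp flip: count_greater_zero_iff)

lemma TT_sub: "TT q \<subseteq> set_mset q"
  by (auto simp: TT_def simp flip: count_greater_zero_iff)

lemma twoparts_TT: "twoparts q = rev (sorted_list_of_set (TT q))"
  by (simp add: twoparts_def TT_def)

lemma TT_Suc: "TT (image_mset Suc q) = Suc ` TT q"
proof (rule set_eqI)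
  fix x show "x \<in> TT (image_mset Suc q) \<longleftrightarrow> x \<in> Suc ` TT q"
    by (cases x) (auto simp: TT_def count_image_Suc)
qed

lemma TT_op2: assumes "count q 1 = 0" shows "TT (add_mset 2 (image_mset Suc q)) = Suc ` TT q"
proof (rule set_eqI)
  fix x show "x \<in> TT (add_mset 2 (image_mset Suc q)) \<longleftrightarrow> x \<in> Suc ` TT q"
    using assms by (cases x) (auto simp: TT_def count_image_Suc)
qed

lemma TT_op3: assumes "count q 0 = 0"
  shows "TT (add_mset 2 (add_mset 2 (image_mset (\<lambda>x. x + 2) q))) = insert 2 ((\<lambda>x. x + 2) ` TT q)"
proof (rule set_eqI)
  let ?M = "add_mset 2 (add_mset 2 (image_mset (\<lambda>x. x + 2) q))"
  fix x show "x \<in> TT ?M \<longleftrightarrow> x \<in> insert 2 ((\<lambda>x. x + 2) ` TT q)"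
  proof (cases "x < 2")
    case True
    have "count (image_mset (\<lambda>x. x + 2) q) x = 0" using True count_image_addk[of 2 q x] by simp
    then have "count ?M x = 0" using True by simp
    moreover have "x \<notin> insert 2 ((\<lambda>x. x + 2) ` TT q)" using True by auto
    ultimately show ?thesis by (simp add: TT_def)
  next
    case False
    then obtain y where y: "x = y + 2" by (intro that[of "x - 2"]) simp
    have ci: "count (image_mset (\<lambda>x. x + 2) q) (y + 2) = count q y"
      by (rule count_image_inj) (simp add: inj_def)
    have c: "count ?M (y + 2) = (if y = 0 then 2 else 0) + count q y"
      by (cases "y = 0") (use ci in simp_all)
    have im: "y + 2 \<in> (\<lambda>x. x + 2) ` A \<longleftrightarrow> y \<in> A" for A by (rule inj_image_mem_iff) (simp add: inj_def)
    show ?thesis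
    proof (cases "y = 0")
      case True then show ?thesis using assms c unfolding y by (simp add: TT_def)
    next
      case False
      then have "x \<noteq> 2" using y by simp
      then have "x \<in> insert 2 ((\<lambda>x. x + 2) ` TT q) \<longleftrightarrow> y \<in> TT q" unfolding y using im by simp
      moreover have "x \<in> TT ?M \<longleftrightarrow> y \<in> TT q" using c False unfolding y by (simp add: TT_def)
      ultimately show ?thesis by simp
    qed
  qed
qed

lemma strict_mono_Suc': "strict_mono Suc" by (simp add: strict_mono_def)
lemma strict_mono_add2: "strict_mono (\<lambda>x::nat. x + 2)" by (simp add: strict_mono_def)

lemma TT_pos: "count q 0 = 0 \<Longrightarrow> x \<in> TT q \<Longrightarrow> 0 < x"
  by (auto simp: TT_def intro!: Nat.gr0I)

lemma twoparts_Suc: "TT q = Suc ` TT q' \<Longrightarrow> twoparts q = map Suc (twoparts q')"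
  by (simp add: twoparts_TT sls_image[OF TT_finite strict_mono_Suc'] rev_map)

lemma twoparts_op3:
  assumes "TT q = insert 2 ((\<lambda>x. x + 2) ` TT q')" "count q' 0 = 0"
  shows "twoparts q = map (\<lambda>x. x + 2) (twoparts q') @ [2]"
proof -
  have "sorted_list_of_set (TT q) = 2 # sorted_list_of_set ((\<lambda>x. x + 2) ` TT q')"
    unfolding assms(1) using TT_pos[OF assms(2)] TT_finite[of q']
    by (intro sls_insert_min) auto
  then show ?thesis
    using sls_image[OF TT_finite strict_mono_add2, of q'] by (simp add: twoparts_TT rev_map)
qed

lemma Rpart_Suc:
  assumes "twoparts q = map Suc (twoparts q')"
  shows "Dnum q = Dnum q'" "Rpart q i = (if 1 \<le> i \<and> i \<le> Dnum q' then Rpart q' i + 1 else 0)"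
  using assms by (auto simp: Dnum_def Rpart_def)

lemma Rpart_op3:
  assumes "twoparts q = map (\<lambda>x. x + 2) (twoparts q') @ [2]"
  shows "Dnum q = Suc (Dnum q')"
    "Rpart q i = (if 1 \<le> i \<and> i \<le> Dnum q' then Rpart q' i + 2 else if i = Suc (Dnum q') then 2 else 0)"
  using assms by (auto simp: Dnum_def Rpart_def nth_append)

lemma Rpart_in: "1 \<le> i \<Longrightarrow> i \<le> Dnum q \<Longrightarrow> Rpart q i \<in># q"
proof -
  assume "1 \<le> i" "i \<le> Dnum q"
  then have "twoparts q ! (i - 1) \<in> set (twoparts q)" by (simp add: Dnum_def)
  also have "set (twoparts q) = TT q" by (simp add: twoparts_TT TT_finite)
  finally show ?thesis using TT_sub \<open>1 \<le> i\<close> \<open>i \<le> Dnum q\<close> by (auto simp: Rpart_def)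
qed

lemma Rpart_out: "\<not> (1 \<le> i \<and> i \<le> Dnum q) \<Longrightarrow> Rpart q i = 0"
  unfolding Rpart_def by auto

definition AA :: "nat multiset \<Rightarrow> nat \<Rightarrow> nat" where
  "AA q i = Rpart q i - Rpart q (Suc i) - size (piece q i)"

definition PP :: "nat multiset \<Rightarrow> nat multiset" where
  "PP q = (\<Sum>i\<in>{0..Dnum q}. image_mset (\<lambda>x. x + 2 * i) (piece q i))"

lemma f_map_alt: "f_map q = (\<Sum>i\<in>{1..Dnum q}. replicate_mset (AA q i) (2 * i)) + PP q"
  by (simp add: f_map_def AA_def PP_def)

lemma image_mset_sum: "image_mset f (sum F A) = (\<Sum>i\<in>A. image_mset f (F i))"
  by (induction A rule: infinite_finite_induct) auto

lemma piece_Suc: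
  assumes D: "Dnum q = Dnum q'"
    and R: "\<And>i. Rpart q i = (if 1 \<le> i \<and> i \<le> Dnum q' then Rpart q' i + 1 else 0)"
    and q: "q = image_mset Suc q'" and pos: "\<forall>y\<in>#q'. 0 < y" and k: "k \<le> Dnum q'"
  shows "piece q k = image_mset Suc (piece q' k)"
proof -
  have "piece q k = image_mset Suc (filter_mset (\<lambda>y. Rpart q (Suc k) < Suc y \<and> (k = 0 \<or> Suc y < Rpart q k)) q')"
    by (simp add: piece_def q filter_mset_image_mset)
  also have "filter_mset (\<lambda>y. Rpart q (Suc k) < Suc y \<and> (k = 0 \<or> Suc y < Rpart q k)) q' = piece q' k"
    unfolding piece_def
    apply (rule filter_mset_cong[OF refl])
    using pos k by (auto simp: R Rpart_out)
  finally show ?thesis .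
qed

lemma piece_op2:
  assumes D: "Dnum q = Dnum q'"
    and R: "\<And>i. Rpart q i = (if 1 \<le> i \<and> i \<le> Dnum q' then Rpart q' i + 1 else 0)"
    and q: "q = add_mset 2 (image_mset Suc q')" and pos: "\<forall>y\<in>#q'. 2 \<le> y" and k: "k \<le> Dnum q'"
  shows "piece q k = (if k = Dnum q' then {#2#} else {#}) + image_mset Suc (piece q' k)"
proof -
  define P where "P = (\<lambda>x. Rpart q (Suc k) < x \<and> (k = 0 \<or> x < Rpart q k))"
  have e: "piece q k = filter_mset P (add_mset 2 (image_mset Suc q'))"
    unfolding piece_def P_def[symmetric] using q by simp
  have X: "filter_mset P (image_mset Suc q') = image_mset Suc (piece q' k)"
    unfolding piece_def filter_mset_image_mset P_def
    apply (rule arg_cong[where f="image_mset _"])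
    apply (rule filter_mset_cong[OF refl])
    using pos k by (auto simp: R Rpart_out)
  have Rge: "1 \<le> i \<Longrightarrow> i \<le> Dnum q' \<Longrightarrow> 2 \<le> Rpart q' i" for i
    using Rpart_in pos by blast
  have C: "P 2 \<longleftrightarrow> k = Dnum q'"
  proof
    assume a: "P 2"
    show "k = Dnum q'"
    proof (rule ccontr)
      assume "k \<noteq> Dnum q'"
      then have "Suc k \<le> Dnum q'" using k by simp
      then show False using a Rge[of "Suc k"] by (simp add: R P_def)
    qed
  next
    assume "k = Dnum q'"
    then show "P 2"
      using Rge[of k] by (auto simp: R P_def)
  qed
  show ?thesis
    unfolding e filter_mset_add_mset using X C by auto
qed

lemma piece_op3:
  assumes D: "Dnum q = Suc (Dnum q')"
    and R: "\<And>i. Rpart q i = (if 1 \<le> i \<and> i \<le> Dnum q' then Rpart q' i + 2 else if i = Suc (Dnum q') then 2 else 0)"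
    and q: "q = add_mset 2 (add_mset 2 (image_mset (\<lambda>x. x + 2) q'))" and pos: "\<forall>y\<in>#q'. 2 \<le> y"
  shows "k \<le> Dnum q' \<Longrightarrow> piece q k = image_mset (\<lambda>x. x + 2) (piece q' k)"
    and "piece q (Suc (Dnum q')) = {#}"
proof -
  have Rge: "1 \<le> i \<Longrightarrow> i \<le> Dnum q' \<Longrightarrow> 2 \<le> Rpart q' i" for i
    using Rpart_in pos by blast
  assume k: "k \<le> Dnum q'"
  define P where "P = (\<lambda>x. Rpart q (Suc k) < x \<and> (k = 0 \<or> x < Rpart q k))"
  have e: "piece q k = filter_mset P (add_mset 2 (add_mset 2 (image_mset (\<lambda>x. x + 2) q')))"
    unfolding piece_def P_def[symmetric] using q by simp
  have X: "filter_mset P (image_mset (\<lambda>x. x + 2) q') = image_mset (\<lambda>x. x + 2) (piece q' k)"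
    unfolding piece_def filter_mset_image_mset P_def
    apply (rule arg_cong[where f="image_mset _"])
    apply (rule filter_mset_cong[OF refl])
    using pos k by (auto simp: R Rpart_out)
  have C: "\<not> P 2"
    using k Rge[of "Suc k"] Rge[of k] by (auto simp: R P_def)
  show "piece q k = image_mset (\<lambda>x. x + 2) (piece q' k)"
    unfolding e filter_mset_add_mset using X C by simp
next
  define P where "P = (\<lambda>x. Rpart q (Suc (Suc (Dnum q'))) < x \<and> (Suc (Dnum q') = 0 \<or> x < Rpart q (Suc (Dnum q'))))"
  have e: "piece q (Suc (Dnum q')) = filter_mset P (add_mset 2 (add_mset 2 (image_mset (\<lambda>x. x + 2) q')))"
    unfolding piece_def P_def[symmetric] using q by simp
  show "piece q (Suc (Dnum q')) = {#}"
    unfolding e using pos by (auto simp: R P_def filter_mset_eq_conv)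
qed

lemma q_op1:
  assumes q: "q = image_mset Suc q'" and pos: "\<forall>y\<in>#q'. 2 \<le> y"
    and A2: "1 \<le> Dnum q' \<Longrightarrow> 2 \<le> AA q' (Dnum q')"
  shows "Dnum q = Dnum q'"
    "\<And>i. 1 \<le> i \<Longrightarrow> i < Dnum q' \<Longrightarrow> AA q i = AA q' i"
    "1 \<le> Dnum q' \<Longrightarrow> AA q (Dnum q') = AA q' (Dnum q') + 1"
    "PP q = image_mset Suc (PP q')"
proof -
  have tw: "twoparts q = map Suc (twoparts q')" using q by (simp add: twoparts_Suc TT_Suc)
  note D = Rpart_Suc(1)[OF tw] and R = Rpart_Suc(2)[OF tw]
  have pos1: "\<forall>y\<in>#q'. 0 < y" using pos by auto
  note pc = piece_Suc[OF D R q pos1]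
  show "Dnum q = Dnum q'" by (rule D)
  show "AA q i = AA q' i" if "1 \<le> i" "i < Dnum q'" for i
    using that by (simp add: AA_def R pc)
  show "AA q (Dnum q') = AA q' (Dnum q') + 1" if "1 \<le> Dnum q'"
    using that A2 by (simp add: AA_def R pc Rpart_out)
  have "PP q = (\<Sum>i\<in>{0..Dnum q'}. image_mset Suc (image_mset (\<lambda>x. x + 2 * i) (piece q' i)))"
    unfolding PP_def D by (rule sum.cong) (auto simp: pc multiset.map_comp o_def)
  then show "PP q = image_mset Suc (PP q')" by (simp add: PP_def image_mset_sum)
qed

lemma q_op2:
  assumes q: "q = add_mset 2 (image_mset Suc q')" and pos: "\<forall>y\<in>#q'. 2 \<le> y"
  shows "Dnum q = Dnum q'"
    "\<And>i. 1 \<le> i \<Longrightarrow> i \<le> Dnum q' \<Longrightarrow> AA q i = AA q' i"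
    "PP q = add_mset (2 * Dnum q' + 2) (image_mset Suc (PP q'))"
proof -
  have c1: "count q' 1 = 0" using pos by (auto simp: count_eq_zero_iff)
  have tw: "twoparts q = map Suc (twoparts q')" using q by (simp add: twoparts_Suc TT_op2[OF c1])
  note D = Rpart_Suc(1)[OF tw] and R = Rpart_Suc(2)[OF tw]
  note pc = piece_op2[OF D R q pos]
  show "Dnum q = Dnum q'" by (rule D)
  show "AA q i = AA q' i" if "1 \<le> i" "i \<le> Dnum q'" for i
    using that by (auto simp: AA_def R pc Rpart_out)
  have "PP q = (\<Sum>i\<in>{0..Dnum q'}. (if i = Dnum q' then {#2 + 2 * i#} else {#})
        + image_mset Suc (image_mset (\<lambda>x. x + 2 * i) (piece q' i)))"
    unfolding PP_def D by (rule sum.cong) (auto simp: pc multiset.map_comp o_def)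
  also have "\<dots> = {#2 + 2 * Dnum q'#} + image_mset Suc (PP q')"
    by (simp add: sum.distrib PP_def image_mset_sum)
  finally show "PP q = add_mset (2 * Dnum q' + 2) (image_mset Suc (PP q'))" by (simp add: add.commute)
qed

lemma q_op3:
  assumes q: "q = add_mset 2 (add_mset 2 (image_mset (\<lambda>x. x + 2) q'))" and pos: "\<forall>y\<in>#q'. 2 \<le> y"
  shows "Dnum q = Suc (Dnum q')"
    "\<And>i. 1 \<le> i \<Longrightarrow> i \<le> Dnum q' \<Longrightarrow> AA q i = AA q' i"
    "AA q (Suc (Dnum q')) = 2"
    "PP q = image_mset (\<lambda>x. x + 2) (PP q')"
proof -
  have c0: "count q' 0 = 0" using pos by (auto simp: count_eq_zero_iff)
  have TTq: "TT q = insert 2 ((\<lambda>x. x + 2) ` TT q')" using TT_op3[OF c0] q by simp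
  have tw: "twoparts q = map (\<lambda>x. x + 2) (twoparts q') @ [2]"
    by (rule twoparts_op3[OF TTq c0])
  note D = Rpart_op3(1)[OF tw] and R = Rpart_op3(2)[OF tw]
  note pc = piece_op3[OF D R q pos]
  show "Dnum q = Suc (Dnum q')" by (rule D)
  show "AA q i = AA q' i" if "1 \<le> i" "i \<le> Dnum q'" for i
    using that by (auto simp: AA_def R pc Rpart_out)
  show "AA q (Suc (Dnum q')) = 2"
    by (simp add: AA_def R pc)
  have "PP q = (\<Sum>i\<in>{0..Dnum q'}. image_mset (\<lambda>x. x + 2) (image_mset (\<lambda>x. x + 2 * i) (piece q' i)))
      + image_mset (\<lambda>x. x + 2 * Suc (Dnum q')) (piece q (Suc (Dnum q')))"
    unfolding PP_def D sum.atLeast0_atMost_Suc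
    by (rule arg_cong2[where f="(+)"], rule sum.cong) (auto simp: pc multiset.map_comp o_def)
  then show "PP q = image_mset (\<lambda>x. x + 2) (PP q')" by (simp add: PP_def image_mset_sum pc)
qed

lemma shift_decomp: "\<forall>x\<in>#M. k \<le> x \<Longrightarrow> M = image_mset (\<lambda>x. x + k) (image_mset (\<lambda>x. x - k) (M::nat multiset))"
  by (induction M) auto

lemma sum_image_addk: "sum_mset (image_mset (\<lambda>x. x + k) (M::nat multiset)) = sum_mset M + k * size M"
  by (induction M) auto

lemma G3_iff: "p \<in> G3 \<longleftrightarrow> count p 0 = 0 \<and> count p 1 \<le> 2 \<and> (\<forall>j\<ge>1. count p j + count p (Suc j) \<le> 2)"
  by (simp add: G3_def is_partition_def count_eq_zero_iff)

lemma cl1: assumes "p \<in> G3" shows "image_mset Suc p \<in> G3"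
proof -
  have h0: "count p 0 = 0" and h1: "count p 1 \<le> 2" and h: "\<And>j. j \<ge> 1 \<Longrightarrow> count p j + count p (Suc j) \<le> 2"
    using assms unfolding G3_iff by auto
  have A: "count (image_mset Suc p) 0 = 0" by (simp add: count_image_Suc)
  have B: "count (image_mset Suc p) 1 \<le> 2" using h0 by (simp add: count_image_Suc)
  have C: "count (image_mset Suc p) j + count (image_mset Suc p) (Suc j) \<le> 2" if j: "1 \<le> j" for j
  proof (cases "j = 1")
    case True
    have "count p 0 + count p 1 \<le> 2" using h0 h1 by linarith
    with True show ?thesis by (simp add: count_image_Suc)
  next
    case False
    then have "count p (j - 1) + count p (Suc (j - 1)) \<le> 2" using h[of "j - 1"] j by simp
    then show ?thesis using j False by (simp add: count_image_Suc)
  qed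
  show ?thesis unfolding G3_iff using A B C by blast
qed

lemma cl2: assumes "p \<in> G3" "count p 1 \<le> 1" shows "add_mset 1 (image_mset Suc p) \<in> G3"
proof -
  have h0: "count p 0 = 0" and h1: "count p 1 \<le> 1" and h: "\<And>j. j \<ge> 1 \<Longrightarrow> count p j + count p (Suc j) \<le> 2"
    using assms unfolding G3_iff by auto
  let ?M = "add_mset 1 (image_mset Suc p)"
  have A: "count ?M 0 = 0" by (simp add: count_image_Suc)
  have B: "count ?M 1 \<le> 2" using h0 by (simp add: count_image_Suc)
  have C: "count ?M j + count ?M (Suc j) \<le> 2" if j: "1 \<le> j" for j
  proof (cases "j = 1")
    case True
    have "1 + count p 0 + count p 1 \<le> 2" using h0 h1 by linarith
    with True show ?thesis by (simp add: count_image_Suc)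
  next
    case False
    then have "count p (j - 1) + count p (Suc (j - 1)) \<le> 2" using h[of "j - 1"] j by simp
    then show ?thesis using j False by (simp add: count_image_Suc)
  qed
  show ?thesis unfolding G3_iff using A B C by blast
qed

lemma cl3: assumes "p \<in> G3" shows "add_mset 1 (add_mset 1 (image_mset (\<lambda>x. x + 2) p)) \<in> G3"
proof -
  have h0: "count p 0 = 0" and h1: "count p 1 \<le> 2" and h: "\<And>j. j \<ge> 1 \<Longrightarrow> count p j + count p (Suc j) \<le> 2"
    using assms unfolding G3_iff by auto
  let ?M = "add_mset 1 (add_mset 1 (image_mset (\<lambda>x. x + 2) p))"
  have cM: "count ?M x = (if x < 2 then 0 else count p (x - 2)) + (if x = 1 then 2 else 0)" for x
    using count_image_addk[of 2 p x] by simp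
  have A: "count ?M 0 = 0" by (simp only: cM) simp
  have B: "count ?M 1 \<le> 2" by (simp only: cM) simp
  have C: "count ?M j + count ?M (Suc j) \<le> 2" if j: "1 \<le> j" for j
  proof -
    consider "j = 1" | "j = 2" | "j \<ge> 3" using j by linarith
    then show ?thesis
    proof cases
      case 1 then show ?thesis using h0 by (simp only: cM) simp
    next
      case 2 then show ?thesis using h0 h1 by (simp only: cM) simp
    next
      case 3
      then have "count p (j - 2) + count p (Suc (j - 2)) \<le> 2" using h[of "j - 2"] by simp
      moreover have "Suc j - 2 = Suc (j - 2)" using 3 by simp
      ultimately show ?thesis using 3 by (simp only: cM) simp
    qed
  qed
  show ?thesis unfolding G3_iff using A B C by blast
qed

lemma split1: "p = replicate_mset (count p 1) 1 + filter_mset (\<lambda>x. x \<noteq> 1) p"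
  using multiset_partition[of p "\<lambda>x. x = 1"] by (simp add: filter_eq_replicate_mset)

lemma count_filter_ne1: "count (filter_mset (\<lambda>x. x \<noteq> 1) p) x = (if x = 1 then 0 else count p x)"
  by simp

lemma dec_gen:
  fixes M :: "nat multiset"
  assumes "\<forall>x\<in>#M. k \<le> x"
  shows "M = image_mset (\<lambda>x. x + k) (image_mset (\<lambda>x. x - k) M)"
    "\<And>j. count (image_mset (\<lambda>x. x - k) M) j = count M (j + k)"
proof -
  show e: "M = image_mset (\<lambda>x. x + k) (image_mset (\<lambda>x. x - k) M)" by (rule shift_decomp[OF assms])
  fix j
  have "count (image_mset (\<lambda>x. x + k) (image_mset (\<lambda>x. x - k) M)) (j + k) = count (image_mset (\<lambda>x. x - k) M) j"
    by (rule count_image_inj) (simp add: inj_def)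
  then show "count (image_mset (\<lambda>x. x - k) M) j = count M (j + k)" using e by simp
qed

lemma G3_D:
  assumes "p \<in> G3"
  shows "count p 0 = 0" "count p 1 \<le> 2" "\<And>j. j \<ge> 1 \<Longrightarrow> count p j + count p (Suc j) \<le> 2"
  using assms unfolding G3_iff by auto

lemma dec1:
  assumes p: "p \<in> G3" and c1: "count p 1 = 0"
  obtains p' where "p' \<in> G3" "p = image_mset Suc p'"
proof -
  note h = G3_D[OF p]
  have ge: "\<forall>x\<in>#p. 1 \<le> x" using h(1) by (metis count_eq_zero_iff less_one not_le)
  have ge2: "\<forall>x\<in>#p. 2 \<le> x" using ge c1 by (metis One_nat_def Suc_1 count_eq_zero_iff le_antisym not_less_eq_eq)
  define p' where "p' = image_mset (\<lambda>x. x - 1) p"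
  have e: "p = image_mset Suc p'" using dec_gen(1)[OF ge] by (simp add: p'_def)
  have c: "count p' j = count p (Suc j)" for j using dec_gen(2)[OF ge, of j] by (simp add: p'_def)
  have "p' \<in> G3" unfolding G3_iff c
  proof (intro conjI allI impI)
    show "count p (Suc 0) = 0" using c1 by simp
    show "count p (Suc 1) \<le> 2" using h(3)[of 1] c1 by simp
    fix j :: nat assume "1 \<le> j" then show "count p (Suc j) + count p (Suc (Suc j)) \<le> 2" using h(3)[of "Suc j"] by simp
  qed
  then show ?thesis using that e by blast
qed

lemma dec2:
  assumes p: "p \<in> G3" and c1: "count p 1 = 1"
  obtains p' where "p' \<in> G3" "count p' 1 \<le> 1" "p = add_mset 1 (image_mset Suc p')"
proof -
  note h = G3_D[OF p]
  define p0 where "p0 = filter_mset (\<lambda>x. x \<noteq> 1) p"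
  have pe: "p = add_mset 1 p0" using split1[of p] c1 by (simp add: p0_def)
  have cp0: "count p0 x = (if x = 1 then 0 else count p x)" for x by (simp add: p0_def)
  have ge: "\<forall>x\<in>#p0. 1 \<le> x" using h(1) cp0 by (metis count_eq_zero_iff less_one not_le)
  define p' where "p' = image_mset (\<lambda>x. x - 1) p0"
  have e: "p0 = image_mset Suc p'" using dec_gen(1)[OF ge] by (simp add: p'_def)
  have c: "count p' j = (if j = 0 then 0 else count p (Suc j))" for j
    using dec_gen(2)[OF ge, of j] cp0 by (simp add: p'_def)
  have h12: "count p 2 \<le> 1" using h(3)[of 1] c1 by (simp add: numeral_2_eq_2)
  have "p' \<in> G3" unfolding G3_iff c
  proof (intro conjI allI impI)
    fix j :: nat assume "1 \<le> j" then show "(if j = 0 then 0 else count p (Suc j)) + (if Suc j = 0 then 0 else count p (Suc (Suc j))) \<le> 2" using h(3)[of "Suc j"] by simp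
  qed (use h12 in \<open>auto simp: numeral_2_eq_2\<close>)
  moreover have "count p' 1 \<le> 1" using h12 c[of 1] by (simp add: numeral_2_eq_2)
  ultimately show ?thesis using that e pe by blast
qed

lemma dec3:
  assumes p: "p \<in> G3" and c1: "count p 1 = 2"
  obtains p' where "p' \<in> G3" "p = add_mset 1 (add_mset 1 (image_mset (\<lambda>x. x + 2) p'))"
proof -
  note h = G3_D[OF p]
  define p0 where "p0 = filter_mset (\<lambda>x. x \<noteq> 1) p"
  have pe: "p = add_mset 1 (add_mset 1 p0)" using split1[of p] c1 by (simp add: p0_def numeral_2_eq_2)
  have cp0: "count p0 x = (if x = 1 then 0 else count p x)" for x by (simp add: p0_def)
  have c2: "count p 2 = 0" using h(3)[of 1] c1 by (simp add: numeral_2_eq_2)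
  have ge: "\<forall>x\<in>#p0. 2 \<le> x"
  proof
    fix x assume "x \<in># p0"
    then have "count p0 x \<noteq> 0" by simp
    have nx1: "x \<noteq> 1"
    proof assume "x = 1" then have "count p0 x = 0" using cp0[of x] by simp
      with \<open>count p0 x \<noteq> 0\<close> show False by contradiction qed
    have nx0: "x \<noteq> 0"
    proof assume "x = 0" then have "count p0 x = 0" using cp0[of x] h(1) by simp
      with \<open>count p0 x \<noteq> 0\<close> show False by contradiction qed
    show "2 \<le> x" using nx0 nx1 by linarith
  qed
  have ge3: "\<forall>x\<in>#p0. 3 \<le> x"
  proof
    fix x assume "x \<in># p0"
    then have "count p0 x \<noteq> 0" by simp
    then have "x \<noteq> 2" using cp0 c2 by auto
    then show "3 \<le> x" using ge \<open>x \<in># p0\<close> by fastforce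
  qed
  define p' where "p' = image_mset (\<lambda>x. x - 2) p0"
  have e: "p0 = image_mset (\<lambda>x. x + 2) p'" using dec_gen(1)[OF ge] by (simp add: p'_def)
  have c: "count p' j = (if j = 0 then 0 else count p (j + 2))" for j
  proof (cases "j = 0")
    case True
    have "0 \<notin># p'" using ge3 by (auto simp: p'_def)
    then show ?thesis using True by (simp add: count_eq_zero_iff)
  next
    case False then show ?thesis using dec_gen(2)[OF ge, of j] cp0 by (simp add: p'_def)
  qed
  have "p' \<in> G3" unfolding G3_iff c
  proof (intro conjI allI impI)
    fix j :: nat assume "1 \<le> j" then show "(if j = 0 then 0 else count p (j + 2)) + (if Suc j = 0 then 0 else count p (Suc j + 2)) \<le> 2" using h(3)[of "j + 2"] by simp
  next
    show "(if 1 = (0::nat) then 0 else count p (1 + 2)) \<le> 2" using h(3)[of 2] by (simp add: numeral_3_eq_3)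
  qed simp
  then show ?thesis using that e pe by blast
qed

lemma sum_image_Suc: "sum_mset (image_mset Suc (M::nat multiset)) = sum_mset M + size M"
  by (induction M) auto

lemma G3_induct[consumes 1, case_names empty op1 op2 op3]:
  assumes "p \<in> G3" "P {#}"
    "\<And>p'. p' \<in> G3 \<Longrightarrow> P p' \<Longrightarrow> P (image_mset Suc p')"
    "\<And>p'. p' \<in> G3 \<Longrightarrow> count p' 1 \<le> 1 \<Longrightarrow> P p' \<Longrightarrow> P (add_mset 1 (image_mset Suc p'))"
    "\<And>p'. p' \<in> G3 \<Longrightarrow> P p' \<Longrightarrow> P (add_mset 1 (add_mset 1 (image_mset (\<lambda>x. x + 2) p')))"
  shows "P p"
  using assms(1)
proof (induction "sum_mset p" arbitrary: p rule: less_induct)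
  case (less p)
  have "count p 1 \<le> 2" using G3_D(2)[OF less.prems] .
  then consider "count p 1 = 0" | "count p 1 = 1" | "count p 1 = 2" by linarith
  then show ?case
  proof cases
    case 1
    show ?thesis
    proof (cases "p = {#}")
      case True then show ?thesis using assms(2) by simp
    next
      case False
      obtain p' where p': "p' \<in> G3" "p = image_mset Suc p'" using dec1[OF less.prems 1] by blast
      have "p' \<noteq> {#}" using False p' by auto
      then have "sum_mset p' < sum_mset p" using p'(2) by (simp add: sum_image_Suc nonempty_has_size)
      then show ?thesis using less.hyps p' assms(3) by blast
    qed
  next
    case 2
    obtain p' where p': "p' \<in> G3" "count p' 1 \<le> 1" "p = add_mset 1 (image_mset Suc p')"
      using dec2[OF less.prems 2] by blast
    have "sum_mset p' < sum_mset p" using p'(3) by (simp add: sum_image_Suc)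
    then show ?thesis using less.hyps p' assms(4) by blast
  next
    case 3
    obtain p' where p': "p' \<in> G3" "p = add_mset 1 (add_mset 1 (image_mset (\<lambda>x. x + 2) p'))"
      using dec3[OF less.prems 3] by blast
    have "sum_mset p' < sum_mset p" using p'(2) sum_image_addk[of 2 p'] by simp
    then show ?thesis using less.hyps p' assms(5) by blast
  qed
qed

definition Dp :: "nat multiset \<Rightarrow> nat" where "Dp p = Dnum (g_map p)"
definition Ap :: "nat multiset \<Rightarrow> nat \<Rightarrow> nat" where "Ap p = AA (g_map p)"
definition Pp :: "nat multiset \<Rightarrow> nat multiset" where "Pp p = PP (g_map p)"

lemma g1: "g_map (image_mset Suc p) = image_mset Suc (g_map p)"
  by (simp add: g_map_def)
lemma g2: "g_map (add_mset 1 (image_mset Suc p)) = add_mset 2 (image_mset Suc (g_map p))"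
  by (simp add: g_map_def)
lemma g3: "g_map (add_mset 1 (add_mset 1 (image_mset (\<lambda>x. x + 2) p))) = add_mset 2 (add_mset 2 (image_mset (\<lambda>x. x + 2) (g_map p)))"
  by (simp add: g_map_def multiset.map_comp o_def numeral_2_eq_2)
lemma gpos: "p \<in> G3 \<Longrightarrow> \<forall>y\<in># g_map p. 2 \<le> y"
  using G3_D(1)[of p] by (auto simp: g_map_def count_eq_zero_iff Suc_le_eq intro!: Nat.gr0I)

lemma d1:
  assumes "p' \<in> G3" "1 \<le> Dp p' \<Longrightarrow> 2 \<le> Ap p' (Dp p')"
  shows "Dp (image_mset Suc p') = Dp p'"
    "\<And>i. 1 \<le> i \<Longrightarrow> i < Dp p' \<Longrightarrow> Ap (image_mset Suc p') i = Ap p' i"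
    "1 \<le> Dp p' \<Longrightarrow> Ap (image_mset Suc p') (Dp p') = Ap p' (Dp p') + 1"
    "Pp (image_mset Suc p') = image_mset Suc (Pp p')"
  using q_op1[OF g1 gpos[OF assms(1)]] assms(2) unfolding Dp_def Ap_def Pp_def by auto

lemma d2:
  assumes "p' \<in> G3"
  shows "Dp (add_mset 1 (image_mset Suc p')) = Dp p'"
    "\<And>i. 1 \<le> i \<Longrightarrow> i \<le> Dp p' \<Longrightarrow> Ap (add_mset 1 (image_mset Suc p')) i = Ap p' i"
    "Pp (add_mset 1 (image_mset Suc p')) = add_mset (2 * Dp p' + 2) (image_mset Suc (Pp p'))"
  using q_op2[OF g2 gpos[OF assms(1)]] unfolding Dp_def Ap_def Pp_def by auto

lemma d3:
  assumes "p' \<in> G3"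
  shows "Dp (add_mset 1 (add_mset 1 (image_mset (\<lambda>x. x + 2) p'))) = Suc (Dp p')"
    "\<And>i. 1 \<le> i \<Longrightarrow> i \<le> Dp p' \<Longrightarrow> Ap (add_mset 1 (add_mset 1 (image_mset (\<lambda>x. x + 2) p'))) i = Ap p' i"
    "Ap (add_mset 1 (add_mset 1 (image_mset (\<lambda>x. x + 2) p'))) (Suc (Dp p')) = 2"
    "Pp (add_mset 1 (add_mset 1 (image_mset (\<lambda>x. x + 2) p'))) = image_mset (\<lambda>x. x + 2) (Pp p')"
  using q_op3[OF g3 gpos[OF assms(1)]] unfolding Dp_def Ap_def Pp_def by auto

lemma d0: "Dp {#} = 0" "Pp {#} = {#}"
proof -
  have t: "twoparts {#} = []" by (simp add: twoparts_def)
  show "Dp {#} = 0" by (simp add: Dp_def g_map_def Dnum_def t)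
  then show "Pp {#} = {#}" by (simp add: Pp_def PP_def g_map_def piece_def Dp_def)
qed

definition Inv :: "nat multiset \<Rightarrow> bool" where
  "Inv p \<longleftrightarrow>
   (\<forall>i. 1 \<le> i \<and> i \<le> Dp p \<longrightarrow> 2 \<le> Ap p i) \<and>
   (\<forall>x\<in>#Pp p. 2 * Dp p + 2 \<le> x) \<and>
   (\<forall>x. count (Pp p) x \<le> 1) \<and>
   size p = size (Pp p) + 2 * Dp p \<and>
   (count p 1 = 2 \<longleftrightarrow> 1 \<le> Dp p \<and> Ap p (Dp p) = 2) \<and>
   (count p 1 \<le> 1 \<longrightarrow> (count p 1 = 1 \<longleftrightarrow> 2 * Dp p + 2 \<in># Pp p)) \<and>
   sum_mset p + size (Pp p) + 2 * Dp p = sum_mset (Pp p) + (\<Sum>i\<in>{1..Dp p}. 2 * i * Ap p i)"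

lemma Inv0: "Inv {#}"
  by (simp add: Inv_def d0)

lemma count_le1_image_inj: "inj f \<Longrightarrow> \<forall>x. count M x \<le> 1 \<Longrightarrow> count (image_mset f M) y \<le> 1"
proof -
  assume inj: "inj f" and c: "\<forall>x. count M x \<le> 1"
  show ?thesis
  proof (cases "y \<in> range f")
    case True
    then obtain x where "y = f x" by blast
    then show ?thesis using count_image_inj[OF inj, of M x] c by simp
  next
    case False
    then have "y \<notin># image_mset f M" by auto
    then have "count (image_mset f M) y = 0" by (simp only: count_eq_zero_iff not_False_eq_True)
    then show ?thesis by simp
  qed
qed

lemma Inv1:
  assumes p': "p' \<in> G3" and I: "Inv p'"
  shows "Inv (image_mset Suc p')"
proof -
  let ?p = "image_mset Suc p'"
  let ?D = "Dp p'"
  have A2: "1 \<le> ?D \<Longrightarrow> 2 \<le> Ap p' ?D" using I by (auto simp: Inv_def)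
  note d = d1[OF p' A2]
  have D: "Dp ?p = ?D" by (rule d(1))
  have Ai: "Ap ?p i = Ap p' i + (if i = ?D then 1 else 0)" if "1 \<le> i" "i \<le> ?D" for i
    using that d(2)[of i] d(3) by (cases "i = ?D") auto
  have P: "Pp ?p = image_mset Suc (Pp p')" by (rule d(4))
  have IA: "\<forall>i. 1 \<le> i \<and> i \<le> ?D \<longrightarrow> 2 \<le> Ap p' i" and IP: "\<forall>x\<in>#Pp p'. 2 * ?D + 2 \<le> x"
    and IC: "\<forall>x. count (Pp p') x \<le> 1" and IS: "size p' = size (Pp p') + 2 * ?D"
    and ISum: "sum_mset p' + size (Pp p') + 2 * ?D = sum_mset (Pp p') + (\<Sum>i\<in>{1..?D}. 2 * i * Ap p' i)"
    using I unfolding Inv_def by blast+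
  have c1: "count ?p 1 = 0" using G3_D(1)[OF p'] by (simp add: count_image_Suc)
  have sumA: "(\<Sum>i\<in>{1..?D}. 2 * i * Ap ?p i) = (\<Sum>i\<in>{1..?D}. 2 * i * Ap p' i) + 2 * ?D"
  proof -
    have "(\<Sum>i\<in>{1..?D}. 2 * i * Ap ?p i) = (\<Sum>i\<in>{1..?D}. 2 * i * Ap p' i + (if i = ?D then 2 * i else 0))"
      by (rule sum.cong) (auto simp: Ai)
    also have "\<dots> = (\<Sum>i\<in>{1..?D}. 2 * i * Ap p' i) + (\<Sum>i\<in>{1..?D}. (if i = ?D then 2 * i else 0))"
      by (rule sum.distrib)
    also have "(\<Sum>i\<in>{1..?D}. (if i = ?D then 2 * i else 0)) = 2 * ?D"
      by (cases "?D = 0") (simp_all add: sum.delta')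
    finally show ?thesis .
  qed
  have "\<forall>i. 1 \<le> i \<and> i \<le> Dp ?p \<longrightarrow> 2 \<le> Ap ?p i" using IA Ai D by auto
  moreover have "\<forall>x\<in>#Pp ?p. 2 * Dp ?p + 2 \<le> x" using IP D P by auto
  moreover have "\<forall>x. count (Pp ?p) x \<le> 1" using IC P count_le1_image_inj[of Suc] by (simp add: inj_def)
  moreover have "size ?p = size (Pp ?p) + 2 * Dp ?p" using IS D P by simp
  moreover have "count ?p 1 = 2 \<longleftrightarrow> 1 \<le> Dp ?p \<and> Ap ?p (Dp ?p) = 2"
    using c1 D Ai[of ?D] A2 by auto
  moreover have "2 * Dp ?p + 2 \<notin># Pp ?p" using IP D P by auto
  moreover have "sum_mset ?p + size (Pp ?p) + 2 * Dp ?p = sum_mset (Pp ?p) + (\<Sum>i\<in>{1..Dp ?p}. 2 * i * Ap ?p i)"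
    using ISum IS D P sumA by (simp add: sum_image_Suc)
  ultimately show ?thesis unfolding Inv_def using c1 by simp
qed

lemma Inv2:
  assumes p': "p' \<in> G3" and c: "count p' 1 \<le> 1" and I: "Inv p'"
  shows "Inv (add_mset 1 (image_mset Suc p'))"
proof -
  let ?p = "add_mset 1 (image_mset Suc p')"
  let ?D = "Dp p'"
  note d = d2[OF p']
  have D: "Dp ?p = ?D" by (rule d(1))
  have Ai: "Ap ?p i = Ap p' i" if "1 \<le> i" "i \<le> ?D" for i using that d(2) by auto
  have P: "Pp ?p = add_mset (2 * ?D + 2) (image_mset Suc (Pp p'))" by (rule d(3))
  have IA: "\<forall>i. 1 \<le> i \<and> i \<le> ?D \<longrightarrow> 2 \<le> Ap p' i" and IP: "\<forall>x\<in>#Pp p'. 2 * ?D + 2 \<le> x"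
    and IC: "\<forall>x. count (Pp p') x \<le> 1" and IS: "size p' = size (Pp p') + 2 * ?D"
    and I2: "count p' 1 = 2 \<longleftrightarrow> 1 \<le> ?D \<and> Ap p' ?D = 2"
    and ISum: "sum_mset p' + size (Pp p') + 2 * ?D = sum_mset (Pp p') + (\<Sum>i\<in>{1..?D}. 2 * i * Ap p' i)"
    using I unfolding Inv_def by blast+
  have c1: "count ?p 1 = 1" using G3_D(1)[OF p'] by (simp add: count_image_Suc)
  have sumA: "(\<Sum>i\<in>{1..?D}. 2 * i * Ap ?p i) = (\<Sum>i\<in>{1..?D}. 2 * i * Ap p' i)"
    by (rule sum.cong[OF refl], subst Ai) auto
  have notin: "2 * ?D + 1 \<notin># Pp p'" using IP by fastforce
  have "\<forall>i. 1 \<le> i \<and> i \<le> Dp ?p \<longrightarrow> 2 \<le> Ap ?p i" using IA Ai D by auto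
  moreover have "\<forall>x\<in>#Pp ?p. 2 * Dp ?p + 2 \<le> x" using IP D P by auto
  moreover have "\<forall>x. count (Pp ?p) x \<le> 1"
  proof
    fix x
    have "count (image_mset Suc (Pp p')) x \<le> 1" using IC count_le1_image_inj[of Suc] by (simp add: inj_def)
    moreover have "count (image_mset Suc (Pp p')) (2 * ?D + 2) = 0"
      using notin by (simp add: count_image_Suc count_eq_zero_iff)
    ultimately show "count (Pp ?p) x \<le> 1" unfolding P by (cases "x = 2 * ?D + 2") auto
  qed
  moreover have "size ?p = size (Pp ?p) + 2 * Dp ?p" using IS D P by simp
  moreover have "count ?p 1 = 2 \<longleftrightarrow> 1 \<le> Dp ?p \<and> Ap ?p (Dp ?p) = 2"
    using c1 D Ai[of ?D] I2 c by auto
  moreover have "2 * Dp ?p + 2 \<in># Pp ?p" using D P by simp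
  moreover have "sum_mset ?p + size (Pp ?p) + 2 * Dp ?p = sum_mset (Pp ?p) + (\<Sum>i\<in>{1..Dp ?p}. 2 * i * Ap ?p i)"
    using ISum IS D P sumA by (simp add: sum_image_Suc)
  ultimately show ?thesis unfolding Inv_def using c1 by simp
qed

lemma Inv3:
  assumes p': "p' \<in> G3" and I: "Inv p'"
  shows "Inv (add_mset 1 (add_mset 1 (image_mset (\<lambda>x. x + 2) p')))"
proof -
  let ?p = "add_mset 1 (add_mset 1 (image_mset (\<lambda>x. x + 2) p'))"
  let ?D = "Dp p'"
  note d = d3[OF p']
  have D: "Dp ?p = Suc ?D" by (rule d(1))
  have Ai: "Ap ?p i = Ap p' i" if "1 \<le> i" "i \<le> ?D" for i using that d(2) by auto
  have AD: "Ap ?p (Suc ?D) = 2" by (rule d(3))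
  have P: "Pp ?p = image_mset (\<lambda>x. x + 2) (Pp p')" by (rule d(4))
  have IA: "\<forall>i. 1 \<le> i \<and> i \<le> ?D \<longrightarrow> 2 \<le> Ap p' i" and IP: "\<forall>x\<in>#Pp p'. 2 * ?D + 2 \<le> x"
    and IC: "\<forall>x. count (Pp p') x \<le> 1" and IS: "size p' = size (Pp p') + 2 * ?D"
    and ISum: "sum_mset p' + size (Pp p') + 2 * ?D = sum_mset (Pp p') + (\<Sum>i\<in>{1..?D}. 2 * i * Ap p' i)"
    using I unfolding Inv_def by blast+
  have c1: "count ?p 1 = 2" using count_image_addk[of 2 p' 1] by simp
  have sumA: "(\<Sum>i\<in>{1..Suc ?D}. 2 * i * Ap ?p i) = (\<Sum>i\<in>{1..?D}. 2 * i * Ap p' i) + 4 * Suc ?D"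
  proof -
    have "(\<Sum>i\<in>{1..Suc ?D}. 2 * i * Ap ?p i) = (\<Sum>i\<in>{1..?D}. 2 * i * Ap ?p i) + 2 * Suc ?D * Ap ?p (Suc ?D)"
      by simp
    also have "(\<Sum>i\<in>{1..?D}. 2 * i * Ap ?p i) = (\<Sum>i\<in>{1..?D}. 2 * i * Ap p' i)"
      by (rule sum.cong[OF refl], subst Ai) auto
    finally show ?thesis using AD by simp
  qed
  have "\<forall>i. 1 \<le> i \<and> i \<le> Dp ?p \<longrightarrow> 2 \<le> Ap ?p i"
  proof (intro allI impI)
    fix i assume "1 \<le> i \<and> i \<le> Dp ?p"
    then show "2 \<le> Ap ?p i" using IA Ai AD D by (cases "i = Suc ?D") auto
  qed
  moreover have "\<forall>x\<in>#Pp ?p. 2 * Dp ?p + 2 \<le> x" using IP D P by auto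
  moreover have "\<forall>x. count (Pp ?p) x \<le> 1"
  proof
    fix x
    have "count (image_mset (\<lambda>x. x + 2) (Pp p')) x \<le> 1"
      by (rule count_le1_image_inj) (simp add: inj_def, rule IC)
    then show "count (Pp ?p) x \<le> 1" unfolding P .
  qed
  moreover have "size ?p = size (Pp ?p) + 2 * Dp ?p" using IS D P by simp
  moreover have "count ?p 1 = 2 \<longleftrightarrow> 1 \<le> Dp ?p \<and> Ap ?p (Dp ?p) = 2"
    using c1 D AD by simp
  moreover have "sum_mset ?p + size (Pp ?p) + 2 * Dp ?p = sum_mset (Pp ?p) + (\<Sum>i\<in>{1..Dp ?p}. 2 * i * Ap ?p i)"
    using ISum IS D P sumA sum_image_addk[of 2 p'] sum_image_addk[of 2 "Pp p'"] by simp
  ultimately show ?thesis unfolding Inv_def using c1 by simp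
qed

lemma Inv_G3: "p \<in> G3 \<Longrightarrow> Inv p"
proof (induction p rule: G3_induct)
  case empty then show ?case by (rule Inv0)
next
  case (op1 p') then show ?case by (rule Inv1)
next
  case (op2 p') then show ?case by (rule Inv2)
next
  case (op3 p') then show ?case by (rule Inv3)
qed

lemma cnt_ev: "count (\<Sum>i\<in>{1..D::nat}. replicate_mset (b i) (2 * i)) (x::nat) =
  (if even x \<and> 2 \<le> x \<and> x \<le> 2 * D then b (x div 2) else 0)"
proof -
  have "count (\<Sum>i\<in>{1..D}. replicate_mset (b i) (2 * i)) x = (\<Sum>i\<in>{1..D}. if i = x div 2 \<and> even x then b i else 0)"
    unfolding count_sum by (rule sum.cong) auto
  also have "\<dots> = (\<Sum>i\<in>{1..D}. if i = x div 2 then (if even x then b i else 0) else 0)"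
    by (rule sum.cong) auto
  also have "\<dots> = (if x div 2 \<in> {1..D} then (if even x then b (x div 2) else 0) else 0)"
    by (subst sum.delta) auto
  also have "\<dots> = (if even x \<and> 2 \<le> x \<and> x \<le> 2 * D then b (x div 2) else 0)"
    by auto
  finally show ?thesis .
qed

lemma cnt_odd: "count (\<Sum>i\<in>{1..D::nat}. replicate_mset 2 (2 * i - 1)) (x::nat) = (if odd x \<and> x < 2 * D then 2 else 0)"
proof -
  have "count (\<Sum>i\<in>{1..D}. replicate_mset 2 (2 * i - 1)) x = (\<Sum>i\<in>{1..D}. if i = (x + 1) div 2 then (if odd x then 2 else 0) else 0)"
    unfolding count_sum by (rule sum.cong) auto
  also have "\<dots> = (if (x + 1) div 2 \<in> {1..D} then (if odd x then 2 else 0) else 0)"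
    by (subst sum.delta) auto
  also have "\<dots> = (if odd x \<and> x < 2 * D then 2 else 0)"
    by auto
  finally show ?thesis .
qed

definition Lam :: "nat \<Rightarrow> (nat \<Rightarrow> nat) \<Rightarrow> nat multiset \<Rightarrow> nat multiset" where
  "Lam D b P = image_mset (\<lambda>x. x - 1) P + (\<Sum>i\<in>{1..D}. replicate_mset (b i) (2 * i))
     + (\<Sum>i\<in>{1..D}. replicate_mset 2 (2 * i - 1))"

definition valid :: "nat \<Rightarrow> nat multiset \<Rightarrow> bool" where
  "valid D P \<longleftrightarrow> (\<forall>x\<in>#P. 2 * D + 2 \<le> x) \<and> (\<forall>x. count P x \<le> 1)"

lemma count_Lam:
  assumes "valid D P"
  shows "count (Lam D b P) x = count P (Suc x) + (if even x \<and> 2 \<le> x \<and> x \<le> 2 * D then b (x div 2) else 0)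
     + (if odd x \<and> x < 2 * D then 2 else 0)"
proof -
  have ge: "\<forall>x\<in>#P. 1 \<le> x" using assms by (auto simp: valid_def)
  have e1: "count (image_mset (\<lambda>x. x - 1) P) x = count P (Suc x)" using dec_gen(2)[OF ge, of x] by simp
  show ?thesis unfolding Lam_def count_union cnt_ev cnt_odd e1 by (rule refl)
qed

lemma countP_small: "valid D P \<Longrightarrow> y < 2 * D + 2 \<Longrightarrow> count P y = 0"
  by (auto simp: valid_def count_eq_zero_iff)

lemma Lam_cong: "(\<And>i. 1 \<le> i \<Longrightarrow> i \<le> D \<Longrightarrow> b i = b' i) \<Longrightarrow> Lam D b P = Lam D b' P"
  unfolding Lam_def by (rule arg_cong2[where f="(+)"], rule arg_cong2[where f="(+)"], simp, rule sum.cong) auto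

lemma Lam_A3:
  assumes v: "valid D P"
  shows "Lam D b P \<in> A3"
proof -
  note c = count_Lam[OF v, of b]
  have "count (Lam D b P) 0 = 0" using c[of 0] countP_small[OF v, of 1] by simp
  then have "is_partition (Lam D b P)" by (simp add: is_partition_def count_eq_zero_iff)
  moreover have "count (Lam D b P) (2 * i - 1) = 2" if "1 \<le> i" "i \<le> D" for i
  proof -
    have "odd (2 * i - 1)" using that by simp
    moreover have "count P (Suc (2 * i - 1)) = 0" using that by (intro countP_small[OF v]) simp
    ultimately show ?thesis using c[of "2 * i - 1"] that by simp
  qed
  moreover have "count (Lam D b P) x \<le> 1" if "2 * D < x" for x
    using c[of x] that v by (simp add: valid_def)
  ultimately show ?thesis unfolding A3_def by blast
qed

lemma Lam_inj:
  assumes v1: "valid D1 P1" and v2: "valid D2 P2" and e: "Lam D1 b1 P1 = Lam D2 b2 P2"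
  shows "D1 = D2" "\<And>i. 1 \<le> i \<Longrightarrow> i \<le> D1 \<Longrightarrow> b1 i = b2 i" "P1 = P2"
proof -
  note c1 = count_Lam[OF v1, of b1] and c2 = count_Lam[OF v2, of b2]
  have ce: "count (Lam D1 b1 P1) x = count (Lam D2 b2 P2) x" for x using e by simp
  have lt: False if v: "valid Da Pa" "valid Db Pb" and ce: "\<And>x. count (Lam Da ba Pa) x = count (Lam Db bb Pb) x"
    and lt: "Da < Db" for Da Db Pa Pb ba bb
  proof -
    have "count (Lam Da ba Pa) (2 * Da + 1) \<le> 1" using count_Lam[OF v(1), of ba "2 * Da + 1"] v(1) by (simp add: valid_def)
    moreover have "count (Lam Db bb Pb) (2 * Da + 1) \<ge> 2" using count_Lam[OF v(2), of bb "2 * Da + 1"] lt by simp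
    ultimately show False using ce[of "2 * Da + 1"] by simp
  qed
  show D: "D1 = D2"
  proof (rule ccontr)
    assume "D1 \<noteq> D2"
    then consider "D1 < D2" | "D2 < D1" by linarith
    then show False
    proof cases
      case 1 then show False using lt[OF v1 v2 ce] by blast
    next
      case 2 then show False using lt[OF v2 v1 ce[symmetric]] by blast
    qed
  qed
  show "b1 i = b2 i" if "1 \<le> i" "i \<le> D1" for i
  proof -
    have "count P1 (Suc (2 * i)) = 0" "count P2 (Suc (2 * i)) = 0"
      using that D by (auto intro!: countP_small[OF v1] countP_small[OF v2])
    then show ?thesis using ce[of "2 * i"] c1[of "2 * i"] c2[of "2 * i"] that D by simp
  qed
  show "P1 = P2"
  proof (rule multiset_eqI)
    fix y
    show "count P1 y = count P2 y"
    proof (cases "y < 2 * D1 + 2")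
      case True then show ?thesis using D countP_small[OF v1] countP_small[OF v2] by simp
    next
      case False
      then obtain x where y: "y = Suc x" and x: "2 * D1 < x" by (intro that[of "y - 1"]) auto
      have n1: "\<not> x \<le> 2 * D1" "\<not> x < 2 * D1" using x by auto
      have "count (Lam D1 b1 P1) x = count P1 (Suc x)" using c1[of x] n1 by simp
      moreover have "count (Lam D2 b2 P2) x = count P2 (Suc x)" using c2[of x] n1 D by simp
      ultimately show ?thesis using ce[of x] y by simp
    qed
  qed
qed

lemma sum_mset_sum: "sum_mset (sum F A) = (\<Sum>i\<in>A. sum_mset (F i))"
  by (induction A rule: infinite_finite_induct) auto

lemma sum_Lam:
  assumes "valid D P"
  shows "sum_mset (Lam D b P) + size P + 2 * D = sum_mset P + (\<Sum>i\<in>{1..D}. 2 * i * (b i + 2))"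
proof -
  have ge: "\<forall>x\<in>#P. 1 \<le> x" using assms by (auto simp: valid_def)
  have s1: "sum_mset (image_mset (\<lambda>x. x - 1) P) + size P = sum_mset P"
    using sum_image_Suc[of "image_mset (\<lambda>x. x - 1) P"] dec_gen(1)[OF ge] by simp
  have s2: "sum_mset (\<Sum>i\<in>{1..D}. replicate_mset (b i) (2 * i)) = (\<Sum>i\<in>{1..D}. b i * (2 * i))"
    by (simp add: sum_mset_sum)
  have s3: "sum_mset (\<Sum>i\<in>{1..D}. replicate_mset 2 (2 * i - 1)) = (\<Sum>i\<in>{1..D}. 2 * (2 * i - 1))"
    by (simp add: sum_mset_sum)
  have e1: "(\<Sum>i\<in>{1..D}. b i * (2 * i)) + (\<Sum>i\<in>{1..D}. 2 * (2 * i - 1)) + (\<Sum>i\<in>{1..D}. (2::nat))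
        = (\<Sum>i\<in>{1..D}. b i * (2 * i) + 2 * (2 * i - 1) + 2)"
    by (simp only: sum.distrib)
  have e2: "(\<Sum>i\<in>{1..D}. b i * (2 * i) + 2 * (2 * i - 1) + 2) = (\<Sum>i\<in>{1..D}. 2 * i * (b i + 2))"
  proof (rule sum.cong[OF refl])
    fix i assume "i \<in> {1..D}"
    then obtain j where "i = Suc j" by (cases i) auto
    then show "b i * (2 * i) + 2 * (2 * i - 1) + 2 = 2 * i * (b i + 2)" by (simp add: algebra_simps)
  qed
  have e3: "(\<Sum>i\<in>{1..D}. (2::nat)) = 2 * D" by simp
  have s4: "(\<Sum>i\<in>{1..D}. b i * (2 * i)) + (\<Sum>i\<in>{1..D}. 2 * (2 * i - 1)) + 2 * D
      = (\<Sum>i\<in>{1..D}. 2 * i * (b i + 2))" using e1 e2 e3 by linarith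
  show ?thesis using s1 s2 s3 s4 by (simp add: Lam_def)
qed

lemma H:
  fixes D :: nat and a :: "nat \<Rightarrow> nat"
  assumes a2: "\<And>i. 1 \<le> i \<Longrightarrow> i \<le> D \<Longrightarrow> 2 \<le> a i" and v: "valid D P"
  shows "h_map ((\<Sum>i\<in>{1..D}. replicate_mset (a i) (2 * i)) + P) = Lam D (\<lambda>i. a i - 2) P"
proof -
  let ?R = "\<Sum>i\<in>{1..D}. replicate_mset (a i) (2 * i)"
  let ?mu = "?R + P"
  have cmu: "count ?mu x = (if even x \<and> 2 \<le> x \<and> x \<le> 2 * D then a (x div 2) else 0) + count P x" for x
    by (simp only: count_union cnt_ev)
  have Ps: "count P x = 0" if "x \<le> 2 * D" for x using countP_small[OF v] that by simp
  have Pc: "count P x \<le> 1" for x using v by (simp add: valid_def)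
  have S: "{j. 2 \<le> count ?mu j} = {j. even j \<and> 2 \<le> j \<and> j \<le> 2 * D}"
  proof (rule set_eqI)
    fix j
    show "j \<in> {j. 2 \<le> count ?mu j} \<longleftrightarrow> j \<in> {j. even j \<and> 2 \<le> j \<and> j \<le> 2 * D}"
    proof (cases "even j \<and> 2 \<le> j \<and> j \<le> 2 * D")
      case True
      then have "2 \<le> a (j div 2)" by (intro a2) auto
      then show ?thesis using True cmu[of j] by simp
    next
      case False
      have "count ?mu j = count P j" unfolding cmu if_not_P[OF False] by simp
      then show ?thesis using False Pc[of j] by simp
    qed
  qed
  have R1: "R1 ?mu = 2 * D"
  proof (cases "D = 0")
    case True
    then have "{j. 2 \<le> count ?mu j} = {}" unfolding S by auto
    then show ?thesis unfolding R1_def using True by simp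
  next
    case False
    have mx: "Max {j::nat. even j \<and> 2 \<le> j \<and> j \<le> 2 * D} = 2 * D"
      by (rule Max_eqI) (use False in \<open>auto intro: finite_subset[of _ "{..2 * D}"]\<close>)
    have ne: "{j::nat. even j \<and> 2 \<le> j \<and> j \<le> 2 * D} \<noteq> {}" using False by (auto intro!: exI[of _ "2 * D"])
    show ?thesis unfolding R1_def S if_not_P[OF ne] by (rule mx)
  qed
  have F1: "filter_mset (\<lambda>x. 2 * D < x) ?mu = P"
  proof (rule multiset_eqI)
    fix x show "count (filter_mset (\<lambda>x. 2 * D < x) ?mu) x = count P x"
      using cmu[of x] Ps[of x] by auto
  qed
  have F2: "filter_mset (\<lambda>x. x \<le> 2 * D) ?mu - (\<Sum>i\<in>{1..D}. replicate_mset 2 (2 * i))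
      = (\<Sum>i\<in>{1..D}. replicate_mset (a i - 2) (2 * i))"
  proof (rule multiset_eqI)
    fix x
    show "count (filter_mset (\<lambda>x. x \<le> 2 * D) ?mu - (\<Sum>i\<in>{1..D}. replicate_mset 2 (2 * i))) x
      = count (\<Sum>i\<in>{1..D}. replicate_mset (a i - 2) (2 * i)) x"
      unfolding count_diff count_filter_mset cmu cnt_ev using Ps[of x] by auto
  qed
  have "h_map ?mu = image_mset (\<lambda>x. x - 1) P + (\<Sum>i\<in>{1..D}. replicate_mset (a i - 2) (2 * i))
      + (\<Sum>i\<in>{1..D}. replicate_mset 2 (2 * i - 1))"
    unfolding h_map_def R1 using F1 F2 by simp
  then show ?thesis by (simp add: Lam_def)
qed

lemma Inv_valid: "Inv p \<Longrightarrow> valid (Dp p) (Pp p)"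
  by (simp add: Inv_def valid_def)

lemma fbar_eq:
  assumes p: "p \<in> G3"
  shows "fbar p = Lam (Dp p) (\<lambda>i. Ap p i - 2) (Pp p)"
proof -
  have I: "Inv p" using Inv_G3[OF p] .
  have a2: "\<And>i. 1 \<le> i \<Longrightarrow> i \<le> Dp p \<Longrightarrow> 2 \<le> Ap p i" using I by (auto simp: Inv_def)
  have "fbar p = h_map ((\<Sum>i\<in>{1..Dp p}. replicate_mset (Ap p i) (2 * i)) + Pp p)"
    by (simp add: fbar_def f_map_alt Dp_def Ap_def Pp_def)
  also have "\<dots> = Lam (Dp p) (\<lambda>i. Ap p i - 2) (Pp p)"
    by (rule H[OF a2 Inv_valid[OF I]])
  finally show ?thesis .
qed

lemma image_mset_inj_eq: "inj f \<Longrightarrow> image_mset f A = image_mset f B \<Longrightarrow> A = B"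
proof (rule multiset_eqI)
  fix x assume "inj f" "image_mset f A = image_mset f B"
  then show "count A x = count B x" using count_image_inj[of f A x] count_image_inj[of f B x] by simp
qed

lemma inv_facts:
  assumes "p \<in> G3"
  shows "\<And>i. 1 \<le> i \<Longrightarrow> i \<le> Dp p \<Longrightarrow> 2 \<le> Ap p i"
    "count p 1 = 2 \<longleftrightarrow> 1 \<le> Dp p \<and> Ap p (Dp p) = 2"
    "count p 1 \<le> 1 \<Longrightarrow> (count p 1 = 1 \<longleftrightarrow> 2 * Dp p + 2 \<in># Pp p)"
    "size p = size (Pp p) + 2 * Dp p"
  using Inv_G3[OF assms] unfolding Inv_def by blast+

lemma cnt_op1: "p' \<in> G3 \<Longrightarrow> count (image_mset Suc p') 1 = 0"
  using G3_D(1)[of p'] by (simp add: count_image_Suc)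
lemma cnt_op2: "p' \<in> G3 \<Longrightarrow> count (add_mset 1 (image_mset Suc p')) 1 = 1"
  using G3_D(1)[of p'] by (simp add: count_image_Suc)
lemma cnt_op3: "count (add_mset 1 (add_mset 1 (image_mset (\<lambda>x. x + 2) (p'::nat multiset)))) 1 = 2"
  using count_image_addk[of 2 p' 1] by simp

definition sameD :: "nat multiset \<Rightarrow> nat multiset \<Rightarrow> bool" where
  "sameD p1 p2 \<longleftrightarrow> Dp p1 = Dp p2 \<and> (\<forall>i. 1 \<le> i \<and> i \<le> Dp p1 \<longrightarrow> Ap p1 i = Ap p2 i) \<and> Pp p1 = Pp p2"

lemma data_inj: "p1 \<in> G3 \<Longrightarrow> \<forall>p2\<in>G3. sameD p1 p2 \<longrightarrow> p1 = p2"
proof (induction p1 rule: G3_induct)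
  case empty
  show ?case
  proof (intro ballI impI)
    fix p2 assume p2: "p2 \<in> G3" and s: "sameD {#} p2"
    then have "Dp p2 = 0" "Pp p2 = {#}" using d0 by (auto simp: sameD_def)
    then have "size p2 = 0" using inv_facts(4)[OF p2] by simp
    then show "{#} = p2" by simp
  qed
next
  case (op1 p1')
  let ?p1 = "image_mset Suc p1'"
  have G1: "?p1 \<in> G3" using cl1[OF op1.hyps(1)] .
  show ?case
  proof (intro ballI impI)
    fix p2 assume p2: "p2 \<in> G3" and s: "sameD ?p1 p2"
    let ?D = "Dp ?p1"
    have sD: "Dp p2 = ?D" and sA: "\<And>i. 1 \<le> i \<Longrightarrow> i \<le> ?D \<Longrightarrow> Ap p2 i = Ap ?p1 i" and sP: "Pp p2 = Pp ?p1"
      using s by (auto simp: sameD_def)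
    have c1: "count ?p1 1 = 0" by (rule cnt_op1[OF op1.hyps(1)])
    have n2: "\<not> (1 \<le> ?D \<and> Ap ?p1 ?D = 2)" using inv_facts(2)[OF G1] c1 by simp
    have n1: "2 * ?D + 2 \<notin># Pp ?p1" using inv_facts(3)[OF G1] c1 by simp
    have "count p2 1 \<noteq> 2" using inv_facts(2)[OF p2] n2 sD sA[of ?D] by auto
    moreover have "count p2 1 \<noteq> 1" using inv_facts(3)[OF p2] n1 sD sP by auto
    moreover have "count p2 1 \<le> 2" using G3_D(2)[OF p2] .
    ultimately have "count p2 1 = 0" by linarith
    then obtain p2' where p2': "p2' \<in> G3" "p2 = image_mset Suc p2'" using dec1[OF p2] by blast
    have A2: "1 \<le> Dp q \<Longrightarrow> 2 \<le> Ap q (Dp q)" if "q \<in> G3" for q using inv_facts(1)[OF that] by simp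
    note e1 = d1[OF op1.hyps(1) A2[OF op1.hyps(1)]] and e2 = d1[OF p2'(1) A2[OF p2'(1)]]
    have D': "Dp p2' = Dp p1'" using e1(1) e2(1) sD p2'(2) by simp
    have "sameD p1' p2'" unfolding sameD_def
    proof (intro conjI allI impI)
      show "Dp p1' = Dp p2'" using D' by simp
    next
      fix i assume i: "1 \<le> i \<and> i \<le> Dp p1'"
      show "Ap p1' i = Ap p2' i"
      proof (cases "i = Dp p1'")
        case True
        then show ?thesis using e1(3) e2(3) sA[of i] i D' e1(1) p2'(2) by simp
      next
        case False
        then show ?thesis using e1(2)[of i] e2(2)[of i] sA[of i] i D' e1(1) p2'(2) by simp
      qed
    next
      have "image_mset Suc (Pp p1') = image_mset Suc (Pp p2')" using e1(4) e2(4) sP p2'(2) by simp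
      then show "Pp p1' = Pp p2'" by (rule image_mset_inj_eq[rotated]) simp
    qed
    then have "p1' = p2'" using op1.IH p2'(1) by blast
    then show "?p1 = p2" using p2'(2) by simp
  qed
next
  case (op2 p1')
  let ?p1 = "add_mset 1 (image_mset Suc p1')"
  have G1: "?p1 \<in> G3" using cl2[OF op2.hyps(1,2)] .
  show ?case
  proof (intro ballI impI)
    fix p2 assume p2: "p2 \<in> G3" and s: "sameD ?p1 p2"
    let ?D = "Dp ?p1"
    have sD: "Dp p2 = ?D" and sA: "\<And>i. 1 \<le> i \<Longrightarrow> i \<le> ?D \<Longrightarrow> Ap p2 i = Ap ?p1 i" and sP: "Pp p2 = Pp ?p1"
      using s by (auto simp: sameD_def)
    have c1: "count ?p1 1 = 1" by (rule cnt_op2[OF op2.hyps(1)])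
    have n2: "\<not> (1 \<le> ?D \<and> Ap ?p1 ?D = 2)" using inv_facts(2)[OF G1] c1 by simp
    have n1: "2 * ?D + 2 \<in># Pp ?p1" using inv_facts(3)[OF G1] c1 by simp
    have "count p2 1 \<noteq> 2" using inv_facts(2)[OF p2] n2 sD sA[of ?D] by auto
    moreover have "count p2 1 \<noteq> 0"
    proof
      assume z: "count p2 1 = 0"
      then have "count p2 1 = 1 \<longleftrightarrow> 2 * Dp p2 + 2 \<in># Pp p2" using inv_facts(3)[OF p2] by simp
      moreover have "2 * Dp p2 + 2 \<in># Pp p2" using n1 sD sP by simp
      ultimately show False using z by simp
    qed
    moreover have "count p2 1 \<le> 2" using G3_D(2)[OF p2] .
    ultimately have "count p2 1 = 1" by linarith
    then obtain p2' where p2': "p2' \<in> G3" "count p2' 1 \<le> 1" "p2 = add_mset 1 (image_mset Suc p2')"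
      using dec2[OF p2] by blast
    note e1 = d2[OF op2.hyps(1)] and e2 = d2[OF p2'(1)]
    have D': "Dp p2' = Dp p1'" using e1(1) e2(1) sD p2'(3) by simp
    have "sameD p1' p2'" unfolding sameD_def
    proof (intro conjI allI impI)
      show "Dp p1' = Dp p2'" using D' by simp
    next
      fix i assume i: "1 \<le> i \<and> i \<le> Dp p1'"
      show "Ap p1' i = Ap p2' i" using e1(2)[of i] e2(2)[of i] sA[of i] i D' e1(1) p2'(3) by simp
    next
      have "image_mset Suc (Pp p1') = image_mset Suc (Pp p2')" using e1(3) e2(3) sP p2'(3) D' by simp
      then show "Pp p1' = Pp p2'" by (rule image_mset_inj_eq[rotated]) simp
    qed
    then have "p1' = p2'" using op2.IH p2'(1) by blast
    then show "?p1 = p2" using p2'(3) by simp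
  qed
next
  case (op3 p1')
  let ?p1 = "add_mset 1 (add_mset 1 (image_mset (\<lambda>x. x + 2) p1'))"
  have G1: "?p1 \<in> G3" using cl3[OF op3.hyps(1)] .
  show ?case
  proof (intro ballI impI)
    fix p2 assume p2: "p2 \<in> G3" and s: "sameD ?p1 p2"
    let ?D = "Dp ?p1"
    have sD: "Dp p2 = ?D" and sA: "\<And>i. 1 \<le> i \<Longrightarrow> i \<le> ?D \<Longrightarrow> Ap p2 i = Ap ?p1 i" and sP: "Pp p2 = Pp ?p1"
      using s by (auto simp: sameD_def)
    have c1: "count ?p1 1 = 2" by (rule cnt_op3)
    have n2: "1 \<le> ?D \<and> Ap ?p1 ?D = 2" using inv_facts(2)[OF G1] c1 by simp
    have "count p2 1 = 2" using inv_facts(2)[OF p2] n2 sD sA[of ?D] by auto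
    then obtain p2' where p2': "p2' \<in> G3" "p2 = add_mset 1 (add_mset 1 (image_mset (\<lambda>x. x + 2) p2'))"
      using dec3[OF p2] by blast
    note e1 = d3[OF op3.hyps(1)] and e2 = d3[OF p2'(1)]
    have D': "Dp p2' = Dp p1'" using e1(1) e2(1) sD p2'(2) by simp
    have "sameD p1' p2'" unfolding sameD_def
    proof (intro conjI allI impI)
      show "Dp p1' = Dp p2'" using D' by simp
    next
      fix i assume i: "1 \<le> i \<and> i \<le> Dp p1'"
      show "Ap p1' i = Ap p2' i" using e1(2)[of i] e2(2)[of i] sA[of i] i D' e1(1) p2'(2) by simp
    next
      have "image_mset (\<lambda>x. x + 2) (Pp p1') = image_mset (\<lambda>x. x + 2) (Pp p2')"
        using e1(4) e2(4) sP p2'(2) by simp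
      then show "Pp p1' = Pp p2'" by (rule image_mset_inj_eq[rotated]) (simp add: inj_def)
    qed
    then have "p1' = p2'" using op3.IH p2'(1) by blast
    then show "?p1 = p2" using p2'(2) by simp
  qed
qed

lemma data_surj:
  "valid D P \<Longrightarrow> \<exists>p\<in>G3. Dp p = D \<and> (\<forall>i. 1 \<le> i \<and> i \<le> D \<longrightarrow> Ap p i = b i + 2) \<and> Pp p = P"
proof (induction "D + (\<Sum>i\<in>{1..D}. b i) + sum_mset P" arbitrary: D b P rule: less_induct)
  case (less D b P)
  have v: "valid D P" by fact
  have Pge: "\<forall>x\<in>#P. 2 * D + 2 \<le> x" and Pc: "\<forall>x. count P x \<le> 1" using v by (auto simp: valid_def)
  show ?case
  proof (cases "1 \<le> D \<and> b D = 0")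
    case True
    define D' where "D' = D - 1"
    have DD: "D = Suc D'" using True by (simp add: D'_def)
    define P' where "P' = image_mset (\<lambda>x. x - 2) P"
    have ge2: "\<forall>x\<in>#P. 2 \<le> x" using Pge by auto
    have Pe: "P = image_mset (\<lambda>x. x + 2) P'" using dec_gen(1)[OF ge2] by (simp add: P'_def)
    have cP': "count P' y = count P (y + 2)" for y using dec_gen(2)[OF ge2] by (simp add: P'_def)
    have v': "valid D' P'"
      unfolding valid_def
    proof (intro conjI ballI allI)
      fix x assume "x \<in># P'"
      then obtain y where "y \<in># P" "x = y - 2" by (auto simp: P'_def)
      then show "2 * D' + 2 \<le> x" using Pge DD by auto
    next
      fix x show "count P' x \<le> 1" using cP' Pc by simp
    qed
    have sb: "(\<Sum>i\<in>{1..D}. b i) = (\<Sum>i\<in>{1..D'}. b i)" using True DD by simp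
    have sP: "sum_mset P' \<le> sum_mset P" using Pe sum_image_addk[of 2 P'] by simp
    have "D' + (\<Sum>i\<in>{1..D'}. b i) + sum_mset P' < D + (\<Sum>i\<in>{1..D}. b i) + sum_mset P"
      using sb sP DD by simp
    then obtain p' where p': "p' \<in> G3" "Dp p' = D'" "\<forall>i. 1 \<le> i \<and> i \<le> D' \<longrightarrow> Ap p' i = b i + 2" "Pp p' = P'"
      using less.hyps[OF _ v'] by blast
    let ?p = "add_mset 1 (add_mset 1 (image_mset (\<lambda>x. x + 2) p'))"
    note e = d3[OF p'(1)]
    have "?p \<in> G3" using cl3[OF p'(1)] .
    moreover have "Dp ?p = D" using e(1) p'(2) DD by simp
    moreover have "\<forall>i. 1 \<le> i \<and> i \<le> D \<longrightarrow> Ap ?p i = b i + 2"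
    proof (intro allI impI)
      fix i assume i: "1 \<le> i \<and> i \<le> D"
      show "Ap ?p i = b i + 2"
      proof (cases "i = D")
        case True then show ?thesis using e(3) p'(2) DD \<open>1 \<le> D \<and> b D = 0\<close> by simp
      next
        case False then show ?thesis using e(2)[of i] p'(2,3) i DD by simp
      qed
    qed
    moreover have "Pp ?p = P" using e(4) p'(4) Pe by simp
    ultimately show ?thesis by blast
  next
    case nA: False
    show ?thesis
    proof (cases "2 * D + 2 \<in># P")
      case True
      define P0 where "P0 = P - {#2 * D + 2#}"
      have Pe0: "P = add_mset (2 * D + 2) P0" using True by (simp add: P0_def)
      have c0: "count P0 (2 * D + 2) = 0" using Pc[rule_format, of "2 * D + 2"] Pe0 by simp
      have ge1: "\<forall>x\<in>#P0. 1 \<le> x" using Pge Pe0 by auto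
      have ge3: "\<forall>x\<in>#P0. 2 * D + 3 \<le> x"
      proof
        fix x assume x: "x \<in># P0"
        then have "x \<noteq> 2 * D + 2" using c0 by (auto simp: count_eq_zero_iff)
        moreover have "2 * D + 2 \<le> x" using Pge Pe0 x by auto
        ultimately show "2 * D + 3 \<le> x" by simp
      qed
      define P' where "P' = image_mset (\<lambda>x. x - 1) P0"
      have Pe': "P0 = image_mset Suc P'" using dec_gen(1)[OF ge1] by (simp add: P'_def)
      have cP': "count P' y = count P0 (Suc y)" for y using dec_gen(2)[OF ge1] by (simp add: P'_def)
      have v': "valid D P'"
        unfolding valid_def
      proof (intro conjI ballI allI)
        fix x assume "x \<in># P'"
        then obtain y where "y \<in># P0" "x = y - 1" by (auto simp: P'_def)
        then show "2 * D + 2 \<le> x" using ge3 by auto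
      next
        fix x
        have "count P0 (Suc x) \<le> count P (Suc x)" by (simp add: P0_def)
        then show "count P' x \<le> 1" using cP'[of x] Pc[rule_format, of "Suc x"] by linarith
      qed
      have sP: "sum_mset P' < sum_mset P" using Pe0 Pe' sum_image_Suc[of P'] by simp
      obtain p' where p': "p' \<in> G3" "Dp p' = D" "\<forall>i. 1 \<le> i \<and> i \<le> D \<longrightarrow> Ap p' i = b i + 2" "Pp p' = P'"
        using less.hyps[OF _ v', of b] sP by auto
      have cnt: "count p' 1 \<le> 1"
      proof -
        have "count p' 1 \<noteq> 2"
        proof
          assume "count p' 1 = 2"
          then have "1 \<le> D \<and> Ap p' D = 2" using inv_facts(2)[OF p'(1)] p'(2) by simp
          then have "1 \<le> D \<and> b D = 0" using p'(3) by auto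
          then show False using nA by blast
        qed
        then show ?thesis using G3_D(2)[OF p'(1)] by linarith
      qed
      let ?p = "add_mset 1 (image_mset Suc p')"
      note e = d2[OF p'(1)]
      have "?p \<in> G3" using cl2[OF p'(1) cnt] .
      moreover have "Dp ?p = D" using e(1) p'(2) by simp
      moreover have "\<forall>i. 1 \<le> i \<and> i \<le> D \<longrightarrow> Ap ?p i = b i + 2" using e(2) p'(2,3) by simp
      moreover have "Pp ?p = P" using e(3) p'(2,4) Pe0 Pe' by simp
      ultimately show ?thesis by blast
    next
      case nB: False
      show ?thesis
      proof (cases "D = 0 \<and> P = {#}")
        case True
        have "{#} \<in> G3" by (simp add: G3_def is_partition_def)
        then show ?thesis using True d0 by auto
      next
        case nC: False
        have ge1: "\<forall>x\<in>#P. 1 \<le> x" using Pge by auto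
        have ge3: "\<forall>x\<in>#P. 2 * D + 3 \<le> x"
        proof
          fix x assume x: "x \<in># P"
          then have "x \<noteq> 2 * D + 2" using nB by auto
          moreover have "2 * D + 2 \<le> x" using Pge x by auto
          ultimately show "2 * D + 3 \<le> x" by simp
        qed
        define P' where "P' = image_mset (\<lambda>x. x - 1) P"
        have Pe': "P = image_mset Suc P'" using dec_gen(1)[OF ge1] by (simp add: P'_def)
        have cP': "count P' y = count P (Suc y)" for y using dec_gen(2)[OF ge1] by (simp add: P'_def)
        have v': "valid D P'"
          unfolding valid_def
        proof (intro conjI ballI allI)
          fix x assume "x \<in># P'"
          then obtain y where "y \<in># P" "x = y - 1" by (auto simp: P'_def)
          then show "2 * D + 2 \<le> x" using ge3 by auto
        next
          fix x show "count P' x \<le> 1" using cP' Pc by simp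
        qed
        define b' where "b' = b(D := b D - 1)"
        have meas: "D + (\<Sum>i\<in>{1..D}. b' i) + sum_mset P' < D + (\<Sum>i\<in>{1..D}. b i) + sum_mset P"
        proof (cases "D = 0")
          case True
          then have "P' \<noteq> {#}" using nC Pe' by auto
          then have "sum_mset P' < sum_mset P" using Pe' sum_image_Suc[of P'] by (simp add: nonempty_has_size)
          then show ?thesis using True by simp
        next
          case False
          then have bD: "1 \<le> b D" using nA by simp
          have "(\<Sum>i\<in>{1..D}. b' i) < (\<Sum>i\<in>{1..D}. b i)"
            by (rule sum_strict_mono_ex1) (use False bD in \<open>auto simp: b'_def\<close>)
          moreover have "sum_mset P' \<le> sum_mset P" using Pe' sum_image_Suc[of P'] by simp
          ultimately show ?thesis by simp
        qed
        obtain p' where p': "p' \<in> G3" "Dp p' = D" "\<forall>i. 1 \<le> i \<and> i \<le> D \<longrightarrow> Ap p' i = b' i + 2" "Pp p' = P'"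
          using less.hyps[OF meas v'] by blast
        have A2: "1 \<le> Dp p' \<Longrightarrow> 2 \<le> Ap p' (Dp p')" using p'(2,3) by simp
        let ?p = "image_mset Suc p'"
        note e = d1[OF p'(1) A2]
        have "?p \<in> G3" using cl1[OF p'(1)] .
        moreover have "Dp ?p = D" using e(1) p'(2) by simp
        moreover have "\<forall>i. 1 \<le> i \<and> i \<le> D \<longrightarrow> Ap ?p i = b i + 2"
        proof (intro allI impI)
          fix i assume i: "1 \<le> i \<and> i \<le> D"
          show "Ap ?p i = b i + 2"
          proof (cases "i = D")
            case True
            then have "1 \<le> b D" using nA i by simp
            then show ?thesis using e(3) p'(2,3) True i by (simp add: b'_def)
          next
            case False then show ?thesis using e(2)[of i] p'(2,3) i by (simp add: b'_def)
          qed
        qed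
        moreover have "Pp ?p = P" using e(4) p'(4) Pe' by simp
        ultimately show ?thesis by blast
      qed
    qed
  qed
qed

lemma A3_Lam:
  assumes l: "l \<in> A3"
  obtains D b P where "valid D P" "l = Lam D b P"
proof -
  from l obtain j where part: "is_partition l"
    and odd2: "\<And>i. 1 \<le> i \<Longrightarrow> i \<le> j \<Longrightarrow> count l (2 * i - 1) = 2"
    and big: "\<And>x. 2 * j < x \<Longrightarrow> count l x \<le> 1"
    unfolding A3_def by blast
  have l0: "count l 0 = 0" using part by (simp add: is_partition_def count_eq_zero_iff)
  define E where "E = filter_mset (\<lambda>x. 2 * j < x) l"
  define P where "P = image_mset Suc E"
  define b where "b = (\<lambda>i. count l (2 * i))"
  have cP: "count P (Suc x) = (if 2 * j < x then count l x else 0)" for x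
    using count_image_inj[of Suc E x] by (simp add: P_def E_def)
  have v: "valid j P"
    unfolding valid_def
  proof (intro conjI ballI allI)
    fix x assume "x \<in># P" then show "2 * j + 2 \<le> x" by (auto simp: P_def E_def)
  next
    fix x show "count P x \<le> 1"
    proof (cases x)
      case 0 then show ?thesis by (simp add: P_def count_image_Suc)
    next
      case (Suc y) then show ?thesis using cP[of y] big[of y] by simp
    qed
  qed
  have "l = Lam j b P"
  proof (rule multiset_eqI)
    fix x
    show "count l x = count (Lam j b P) x"
    proof (cases "2 * j < x")
      case True
      then show ?thesis unfolding count_Lam[OF v] cP by simp
    next
      case False
      then have cz: "count P (Suc x) = 0" using cP[of x] by simp
      have "x = 0 \<or> (even x \<and> 2 \<le> x) \<or> odd x"
      proof (cases "even x")
        case True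
        then have "x \<noteq> 1" by auto
        then show ?thesis using True by auto
      qed simp
      then consider "x = 0" | "even x" "2 \<le> x" | "odd x" by blast
      then show ?thesis
      proof cases
        case 1 then show ?thesis unfolding count_Lam[OF v] using cz l0 by simp
      next
        case 2
        then have "b (x div 2) = count l x" by (simp add: b_def)
        then show ?thesis unfolding count_Lam[OF v] using cz 2 False by simp
      next
        case 3
        then obtain i where i: "x = 2 * i - 1" "1 \<le> i" by (intro that[of "(x + 1) div 2"]) (auto elim!: oddE)
        then have "i \<le> j" using False 3 by presburger
        then have "count l x = 2" using odd2[OF i(2)] i(1) by simp
        moreover have "x < 2 * j" using False 3 by presburger
        ultimately show ?thesis unfolding count_Lam[OF v] using cz 3 by simp
      qed
    qed
  qed
  then show ?thesis using that v by blast
qed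

theorem mainTheorem4:
  shows "bij_betw fbar G3 A3 \<and> (\<forall>p\<in>G3. sum_mset (fbar p) = sum_mset p)"
proof (intro conjI ballI)
  show "bij_betw fbar G3 A3"
    unfolding bij_betw_def
  proof (intro conjI)
    show "inj_on fbar G3"
    proof (rule inj_onI)
      fix p1 p2 assume p1: "p1 \<in> G3" and p2: "p2 \<in> G3" and e: "fbar p1 = fbar p2"
      have v1: "valid (Dp p1) (Pp p1)" and v2: "valid (Dp p2) (Pp p2)"
        using Inv_valid Inv_G3 p1 p2 by blast+
      note li = Lam_inj[OF v1 v2 e[unfolded fbar_eq[OF p1] fbar_eq[OF p2]]]
      have "sameD p1 p2" unfolding sameD_def
      proof (intro conjI allI impI)
        show "Dp p1 = Dp p2" by (rule li(1))
      next
        fix i assume i: "1 \<le> i \<and> i \<le> Dp p1"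
        have "Ap p1 i - 2 = Ap p2 i - 2" using li(2) i by blast
        moreover have "2 \<le> Ap p1 i" "2 \<le> Ap p2 i" using inv_facts(1)[OF p1] inv_facts(1)[OF p2] i li(1) by auto
        ultimately show "Ap p1 i = Ap p2 i" by linarith
      next
        show "Pp p1 = Pp p2" by (rule li(3))
      qed
      then show "p1 = p2" using data_inj[OF p1] p2 by blast
    qed
  next
    show "fbar ` G3 = A3"
    proof
      show "fbar ` G3 \<subseteq> A3"
        using fbar_eq Lam_A3 Inv_valid Inv_G3 by auto
    next
      show "A3 \<subseteq> fbar ` G3"
      proof
        fix l assume "l \<in> A3"
        then obtain D b P where v: "valid D P" and l: "l = Lam D b P" by (rule A3_Lam)
        obtain p where p: "p \<in> G3" "Dp p = D" "\<forall>i. 1 \<le> i \<and> i \<le> D \<longrightarrow> Ap p i = b i + 2" "Pp p = P"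
          using data_surj[OF v, of b] by blast
        have "fbar p = Lam D (\<lambda>i. Ap p i - 2) P" using fbar_eq[OF p(1)] p(2,4) by simp
        also have "\<dots> = Lam D b P" by (rule Lam_cong) (use p(3) in simp)
        finally have "l = fbar p" using l by simp
        then show "l \<in> fbar ` G3" using p(1) by (rule image_eqI)
      qed
    qed
  qed
next
  fix p assume p: "p \<in> G3"
  have I: "Inv p" using Inv_G3[OF p] .
  have a2: "\<And>i. 1 \<le> i \<Longrightarrow> i \<le> Dp p \<Longrightarrow> 2 \<le> Ap p i" using inv_facts(1)[OF p] .
  have IS: "sum_mset p + size (Pp p) + 2 * Dp p = sum_mset (Pp p) + (\<Sum>i\<in>{1..Dp p}. 2 * i * Ap p i)"
    using I unfolding Inv_def by blast
  have SL: "sum_mset (fbar p) + size (Pp p) + 2 * Dp p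
      = sum_mset (Pp p) + (\<Sum>i\<in>{1..Dp p}. 2 * i * (Ap p i - 2 + 2))"
    unfolding fbar_eq[OF p] by (rule sum_Lam[OF Inv_valid[OF I]])
  have "(\<Sum>i\<in>{1..Dp p}. 2 * i * (Ap p i - 2 + 2)) = (\<Sum>i\<in>{1..Dp p}. 2 * i * Ap p i)"
  proof (rule sum.cong[OF refl])
    fix i assume "i \<in> {1..Dp p}"
    then have "Ap p i - 2 + 2 = Ap p i" using a2[of i] by simp
    then show "2 * i * (Ap p i - 2 + 2) = 2 * i * Ap p i" by (simp only:)
  qed
  then show "sum_mset (fbar p) = sum_mset p" using IS SL by linarith
qed

end
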